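(* Let $p$ be a positive stochastic choice function for which $\sim_p$ is transitive. If $p$ exhibits the similarity effect, then $p$ satisfies Similar Regularity.
   Context: $X$ is a finite set, $\mathscr{A}$ the nonempty subsets; $p:X\times\mathscr{A}\to[0,1]$ with $\sum_{a\in A}p(a,A)=1$, $p(x,A)=0$ for $x\notin A$, $p(a,A)>0$ for $a\in A$; $A\cup x=A\cup\{x\}$. $a\sim_p b$ means $\frac{p(a,A)}{p(b,A)}=\frac{p(a,\{a,b\})}{p(b,\{a,b\})}$ for every $A\in\mathscr{A}$ containing $a,b$. Similarity effect: for all $A\in\mathscr{A}$, $a,b\in A$, $x\notin A$: if $a\sim_p x$ and $b\not\sim_p x$, then $\frac{p(a,A\cup x)}{p(b,A\cup x)}<\frac{p(a,A)}{p(b,A)}$. Similar Regularity: for any $A\in\mathscr{A}$, $x\in A$ and $y\in X$ with $x\sim_p y$, $p(x,A\cup y)\le p(x,A)$. *)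

theory Defs
  imports Complex_Main
begin

text \<open>A (positive) stochastic choice function on the finite ground set X:
  p x A is the probability of choosing x from the menu A, for nonempty A \<subseteq> X.\<close>

definition menus :: "'a set \<Rightarrow> 'a set set" where
  "menus X = {A. A \<subseteq> X \<and> A \<noteq> {}}"

definition positive_scf :: "'a set \<Rightarrow> ('a \<Rightarrow> 'a set \<Rightarrow> real) \<Rightarrow> bool" where
  "positive_scf X p \<longleftrightarrow> finite X \<and>
     (\<forall>A \<in> menus X. (\<forall>x \<in> X. 0 \<le> p x A \<and> p x A \<le> 1)
        \<and> (\<Sum>a\<in>A. p a A) = 1
        \<and> (\<forall>x \<in> X. x \<notin> A \<longrightarrow> p x A = 0)
        \<and> (\<forall>a \<in> A. p a A > 0))"

definition sim :: "'a set \<Rightarrow> ('a \<Rightarrow> 'a set \<Rightarrow> real) \<Rightarrow> 'a \<Rightarrow> 'a \<Rightarrow> bool" where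
  "sim X p a b \<longleftrightarrow> (\<forall>A \<in> menus X. a \<in> A \<longrightarrow> b \<in> A \<longrightarrow>
      p a A / p b A = p a {a, b} / p b {a, b})"

definition sim_transitive :: "'a set \<Rightarrow> ('a \<Rightarrow> 'a set \<Rightarrow> real) \<Rightarrow> bool" where
  "sim_transitive X p \<longleftrightarrow>
     (\<forall>a \<in> X. \<forall>b \<in> X. \<forall>c \<in> X. sim X p a b \<longrightarrow> sim X p b c \<longrightarrow> sim X p a c)"

definition similarity_effect :: "'a set \<Rightarrow> ('a \<Rightarrow> 'a set \<Rightarrow> real) \<Rightarrow> bool" where
  "similarity_effect X p \<longleftrightarrow>
     (\<forall>A \<in> menus X. \<forall>a \<in> A. \<forall>b \<in> A. \<forall>x \<in> X. x \<notin> A \<longrightarrow>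
        sim X p a x \<longrightarrow> \<not> sim X p b x \<longrightarrow>
        p a (insert x A) / p b (insert x A) < p a A / p b A)"

definition similar_regularity :: "'a set \<Rightarrow> ('a \<Rightarrow> 'a set \<Rightarrow> real) \<Rightarrow> bool" where
  "similar_regularity X p \<longleftrightarrow>
     (\<forall>A \<in> menus X. \<forall>x \<in> A. \<forall>y \<in> X. sim X p x y \<longrightarrow> p x (insert y A) \<le> p x A)"

end

theory Submission
  imports Defs
begin

lemma sim_sym:
  assumes P: "positive_scf X p" and s: "sim X p a b"
  shows "sim X p b a"
  unfolding sim_def
proof (intro ballI impI)
  fix A assume A: "A \<in> menus X" and b: "b \<in> A" and a: "a \<in> A"
  have e: "p a A / p b A = p a {a, b} / p b {a, b}" using s A a b unfolding sim_def by blast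
  have "p b A / p a A = inverse (p a A / p b A)" by simp
  also have "\<dots> = inverse (p a {a, b} / p b {a, b})" using e by simp
  also have "\<dots> = p b {b, a} / p a {b, a}" by (simp add: insert_commute)
  finally show "p b A / p a A = p b {b, a} / p a {b, a}" .
qed

theorem proposition7:
  fixes X :: "'a set" and p :: "'a \<Rightarrow> 'a set \<Rightarrow> real"
  assumes "positive_scf X p"
    and "sim_transitive X p"
    and "similarity_effect X p"
  shows "similar_regularity X p"
  unfolding similar_regularity_def
proof (intro ballI impI)
  fix A x y assume A: "A \<in> menus X" and x: "x \<in> A" and y: "y \<in> X" and sxy: "sim X p x y"
  have fin: "finite X" using assms(1) unfolding positive_scf_def by blast
  have AX: "A \<subseteq> X" using A unfolding menus_def by blast
  have finA: "finite A" using fin AX finite_subset by blast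
  define A' where "A' = insert y A"
  have A'm: "A' \<in> menus X" using AX y unfolding A'_def menus_def by blast
  have pos: "\<And>B z. B \<in> menus X \<Longrightarrow> z \<in> B \<Longrightarrow> p z B > 0"
    using assms(1) unfolding positive_scf_def by blast
  have nn: "\<And>B z. B \<in> menus X \<Longrightarrow> z \<in> X \<Longrightarrow> p z B \<ge> 0"
    using assms(1) unfolding positive_scf_def by blast
  have sum1: "\<And>B. B \<in> menus X \<Longrightarrow> (\<Sum>z\<in>B. p z B) = 1"
    using assms(1) unfolding positive_scf_def by blast
  show "p x (insert y A) \<le> p x A"
  proof (cases "y \<in> A")
    case True then show ?thesis by (simp add: insert_absorb)
  next
    case yA: False
    have pxA: "p x A > 0" using pos A x by blast
    have pxA': "p x A' > 0" using pos A'm x unfolding A'_def by blast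
    have key: "p z A / p x A \<le> p z A' / p x A'" if z: "z \<in> A" for z
    proof -
      have pzA: "p z A > 0" using pos A z by blast
      have pzA': "p z A' > 0" using pos A'm z unfolding A'_def by blast
      have r: "p x A' / p z A' \<le> p x A / p z A"
      proof (cases "sim X p z y")
        case True
        have "sim X p y x" using sim_sym[OF assms(1) sxy] .
        hence szx: "sim X p z x" using assms(2) True z AX x y unfolding sim_transitive_def by blast
        have "p z A / p x A = p z {z,x} / p x {z,x}" using szx A z x unfolding sim_def by blast
        moreover have "p z A' / p x A' = p z {z,x} / p x {z,x}" using szx A'm z x unfolding sim_def A'_def by blast
        ultimately have "p z A' / p x A' = p z A / p x A" by simp
        hence "inverse (p z A' / p x A') = inverse (p z A / p x A)" by simp
        thus ?thesis by simp
      next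
        case False
        have "p x (insert y A) / p z (insert y A) < p x A / p z A"
          using assms(3) A x z y yA sxy False unfolding similarity_effect_def by blast
        thus ?thesis unfolding A'_def by simp
      qed
      have "p z A / p x A = inverse (p x A / p z A)" by simp
      also have "\<dots> \<le> inverse (p x A' / p z A')"
        using r pxA' pzA' by (intro le_imp_inverse_le) auto
      also have "\<dots> = p z A' / p x A'" by simp
      finally show ?thesis .
    qed
    have "1 / p x A = (\<Sum>z\<in>A. p z A) / p x A" using sum1 A by simp
    also have "\<dots> = (\<Sum>z\<in>A. p z A / p x A)" by (simp add: sum_divide_distrib)
    also have "\<dots> \<le> (\<Sum>z\<in>A. p z A' / p x A')" using key by (intro sum_mono) auto
    also have "\<dots> \<le> (\<Sum>z\<in>A'. p z A' / p x A')"
      using finA yA nn[OF A'm y] pxA' unfolding A'_def by simp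
    also have "\<dots> = (\<Sum>z\<in>A'. p z A') / p x A'" by (simp add: sum_divide_distrib)
    also have "\<dots> = 1 / p x A'" using sum1 A'm by simp
    finally have "1 / p x A \<le> 1 / p x A'" .
    hence "p x A' \<le> p x A" using pxA pxA' by (simp add: field_simps)
    thus ?thesis unfolding A'_def .
  qed
qed

end
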